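(* Let $k\geq 2$ be an integer. For every finite simple graph $G$ of order $n$ and size $m$ with minimum degree $\delta(G)\geq k$, $$\gamma_{\times k}(G)\geq \frac{(\delta(G)+k)\,n-2m}{\delta(G)+1}.$$
   Context: All graphs are finite and simple, with vertex set $V(G)$; order is the number of vertices and size the number of edges. For $v\in V(G)$ and $D\subseteq V(G)$, $\deg_D(v)$ is the number of neighbours of $v$ in $D$. $\delta(G)$ denotes the minimum degree. For a positive integer $k\leq \delta(G)+1$, a $k$-tuple dominating set of $G$ is a set $D\subseteq V(G)$ such that $\deg_D(v)\geq k$ for every $v\in V(G)\setminus D$ and $\deg_D(v)\geq k-1$ for every $v\in D$; the $k$-tuple domination number $\gamma_{\times k}(G)$ is the minimum cardinality of a $k$-tuple dominating set. *)

theory Defs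
  imports Complex_Main
begin

definition simple_graph :: "'a set \<Rightarrow> ('a \<Rightarrow> 'a \<Rightarrow> bool) \<Rightarrow> bool" where
  "simple_graph V E \<longleftrightarrow> finite V \<and> (\<forall>u v. E u v \<longrightarrow> u \<in> V \<and> v \<in> V)
     \<and> (\<forall>v. \<not> E v v) \<and> (\<forall>u v. E u v \<longrightarrow> E v u)"

definition edge_set :: "'a set \<Rightarrow> ('a \<Rightarrow> 'a \<Rightarrow> bool) \<Rightarrow> 'a set set" where
  "edge_set V E = {{u, v} | u v. u \<in> V \<and> v \<in> V \<and> E u v}"

definition deg_in :: "('a \<Rightarrow> 'a \<Rightarrow> bool) \<Rightarrow> 'a set \<Rightarrow> 'a \<Rightarrow> nat" where
  "deg_in E D v = card {u \<in> D. E v u}"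

definition min_degree :: "'a set \<Rightarrow> ('a \<Rightarrow> 'a \<Rightarrow> bool) \<Rightarrow> nat" where
  "min_degree V E = Min ((deg_in E V) ` V)"

definition k_tuple_dominating :: "'a set \<Rightarrow> ('a \<Rightarrow> 'a \<Rightarrow> bool) \<Rightarrow> nat \<Rightarrow> 'a set \<Rightarrow> bool" where
  "k_tuple_dominating V E k D \<longleftrightarrow> D \<subseteq> V
     \<and> (\<forall>v \<in> V - D. deg_in E D v \<ge> k)
     \<and> (\<forall>v \<in> D. deg_in E D v + 1 \<ge> k)"

definition k_tuple_domination_number :: "'a set \<Rightarrow> ('a \<Rightarrow> 'a \<Rightarrow> bool) \<Rightarrow> nat \<Rightarrow> nat" where
  "k_tuple_domination_number V E k = Min (card ` {D. k_tuple_dominating V E k D})"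

end

theory Submission imports Defs begin
lemma deg_as_sum:
  assumes "finite W"
  shows "deg_in E W v = (\<Sum>u\<in>W. if E v u then 1 else 0)"
  unfolding deg_in_def using assms by (simp add: sum.If_cases Int_def conj_commute)

lemma deg_sum_swap:
  assumes "finite V" "W \<subseteq> V" "\<And>u v. E u v \<Longrightarrow> E v u"
  shows "(\<Sum>v\<in>V. deg_in E W v) = (\<Sum>u\<in>W. deg_in E V u)"
proof -
  have fW: "finite W" using assms finite_subset by blast
  have "(\<Sum>v\<in>V. deg_in E W v) = (\<Sum>v\<in>V. \<Sum>u\<in>W. (if E v u then 1 else 0::nat))"
    using fW by (simp add: deg_as_sum)
  also have "\<dots> = (\<Sum>u\<in>W. \<Sum>v\<in>V. (if E v u then 1 else 0::nat))" by (rule sum.swap)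
  also have "\<dots> = (\<Sum>u\<in>W. \<Sum>v\<in>V. (if E u v then 1 else 0::nat))"
    proof -
    have "\<And>u v. E v u = E u v" using assms(3) by blast
    thus ?thesis by simp
  qed
  also have "\<dots> = (\<Sum>u\<in>W. deg_in E V u)"
    using assms(1) by (simp add: deg_as_sum)
  finally show ?thesis .
qed
lemma handshake_le:
  assumes "simple_graph V E"
  shows "(\<Sum>v\<in>V. deg_in E V v) \<le> 2 * card (edge_set V E)"
proof -
  have fV: "finite V" using assms unfolding simple_graph_def by blast
  define P where "P = (SIGMA v:V. {u\<in>V. E v u})"
  have "(\<Sum>v\<in>V. deg_in E V v) = card P"
    unfolding P_def deg_in_def using fV by (simp add: card_SigmaI)
  define F where "F e = {p\<in>P. {fst p, snd p} = e}" for e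
  have fES: "finite (edge_set V E)"
  proof -
    have "edge_set V E \<subseteq> Pow V" unfolding edge_set_def by auto
    thus ?thesis using fV finite_subset by blast
  qed
  have "P \<subseteq> (\<Union>e\<in>edge_set V E. F e)"
  proof
    fix p assume "p \<in> P"
    then obtain a b where p: "p = (a,b)" "a \<in> V" "b \<in> V" "E a b" unfolding P_def by auto
    have "{a,b} \<in> edge_set V E" unfolding edge_set_def using p by blast
    moreover have "p \<in> F {a,b}" unfolding F_def using \<open>p \<in> P\<close> p by simp
    ultimately show "p \<in> (\<Union>e\<in>edge_set V E. F e)" by blast
  qed
  hence "card P \<le> card (\<Union>e\<in>edge_set V E. F e)"
    using fES fV by (intro card_mono) (auto simp: F_def P_def)
  also have "\<dots> \<le> (\<Sum>e\<in>edge_set V E. card (F e))" using fES by (rule card_UN_le)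
  also have "\<dots> \<le> (\<Sum>e\<in>edge_set V E. 2)"
  proof (rule sum_mono)
    fix e assume "e \<in> edge_set V E"
    then obtain a b where e: "e = {a,b}" unfolding edge_set_def by auto
    have "F e \<subseteq> {(a,b),(b,a)}" unfolding F_def e by (auto simp: doubleton_eq_iff)
    hence "card (F e) \<le> card {(a,b),(b,a)}" by (intro card_mono) auto
    also have "\<dots> \<le> 2" by (rule card_insert_le_m1) auto
    finally show "card (F e) \<le> 2" .
  qed
  finally show ?thesis using \<open>(\<Sum>v\<in>V. deg_in E V v) = card P\<close> by simp
qed

theorem mainTheorem4:
  fixes V :: "'a set" and E :: "'a \<Rightarrow> 'a \<Rightarrow> bool" and k :: nat
  assumes "k \<ge> 2"
    and "simple_graph V E"
    and "V \<noteq> {}"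
    and "min_degree V E \<ge> k"
  shows "real (k_tuple_domination_number V E k) \<ge>
    ((real (min_degree V E) + real k) * real (card V) - 2 * real (card (edge_set V E)))
      / (real (min_degree V E) + 1)"
proof -
  have G: "finite V" "\<And>u v. E u v \<Longrightarrow> u \<in> V \<and> v \<in> V" "\<And>u v. E u v \<Longrightarrow> E v u"
    using assms(2) unfolding simple_graph_def by blast+
  define d where "d = min_degree V E"
  have dle: "\<And>v. v \<in> V \<Longrightarrow> d \<le> deg_in E V v"
    unfolding d_def min_degree_def using G(1) by (intro Min_le) auto
  have Vdom: "k_tuple_dominating V E k V"
    unfolding k_tuple_dominating_def using dle assms(4) d_def by fastforce
  have fin: "finite (card ` {D. k_tuple_dominating V E k D})"
  proof -
    have "{D. k_tuple_dominating V E k D} \<subseteq> Pow V" unfolding k_tuple_dominating_def by auto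
    thus ?thesis using G(1) finite_subset by blast
  qed
  have "k_tuple_domination_number V E k \<in> card ` {D. k_tuple_dominating V E k D}"
    unfolding k_tuple_domination_number_def using fin Vdom by (intro Min_in) auto
  then obtain D where D: "k_tuple_dominating V E k D" and gD: "k_tuple_domination_number V E k = card D"
    by auto
  have DV: "D \<subseteq> V" using D unfolding k_tuple_dominating_def by auto
  have fD: "finite D" using DV G(1) finite_subset by blast
  define n where "n = card V"
  define g where "g = card D"
  have nD: "card (V - D) = n - g" "g \<le> n" unfolding n_def g_def using DV G(1) fD
    by (auto simp: card_Diff_subset card_mono)
  have split: "\<And>v. deg_in E V v = deg_in E D v + deg_in E (V - D) v"
  proof -
    fix v
    have "{u \<in> V. E v u} = {u \<in> D. E v u} \<union> {u \<in> V - D. E v u}" using DV by auto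
    moreover have "card ({u \<in> D. E v u} \<union> {u \<in> V - D. E v u}) = card {u \<in> D. E v u} + card {u \<in> V - D. E v u}"
      using fD G(1) by (intro card_Un_disjoint) auto
    ultimately show "deg_in E V v = deg_in E D v + deg_in E (V - D) v" unfolding deg_in_def by simp
  qed
  have S: "(\<Sum>v\<in>V. deg_in E V v) = (\<Sum>v\<in>V. deg_in E D v) + (\<Sum>v\<in>V. deg_in E (V - D) v)"
    by (simp add: split sum.distrib)
  have A: "(\<Sum>v\<in>V. deg_in E (V - D) v) \<ge> d * (n - g)"
  proof -
    have "(\<Sum>v\<in>V. deg_in E (V - D) v) = (\<Sum>u\<in>V - D. deg_in E V u)"
      using G by (intro deg_sum_swap) auto
    also have "\<dots> \<ge> (\<Sum>u\<in>V - D. d)" using dle by (intro sum_mono) auto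
    finally show ?thesis using nD by (simp add: mult.commute)
  qed
  have B: "real (\<Sum>v\<in>V. deg_in E D v) \<ge> real k * (real n - real g) + (real k - 1) * real g"
  proof -
    have "(\<Sum>v\<in>V. deg_in E D v) = (\<Sum>v\<in>V - D. deg_in E D v) + (\<Sum>v\<in>D. deg_in E D v)"
      using DV G(1) by (metis sum.subset_diff)
    moreover have "(\<Sum>v\<in>V - D. deg_in E D v) \<ge> (\<Sum>v\<in>V - D. k)"
      using D unfolding k_tuple_dominating_def by (intro sum_mono) auto
    moreover have "(\<Sum>v\<in>D. real (deg_in E D v)) \<ge> (\<Sum>v\<in>D. real k - 1)"
      using D unfolding k_tuple_dominating_def by (intro sum_mono) force
    moreover have "real (\<Sum>v\<in>V. deg_in E D v) = real (\<Sum>v\<in>V - D. deg_in E D v) + (\<Sum>v\<in>D. real (deg_in E D v))"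
      using calculation(1) by simp
    moreover have "(\<Sum>v\<in>V - D. k) = (n - g) * k" using nD by simp
    moreover have "(\<Sum>v\<in>D. real k - 1) = real g * (real k - 1)" using g_def by simp
    ultimately have "real (\<Sum>v\<in>V. deg_in E D v) \<ge> real ((n - g) * k) + real g * (real k - 1)"
      by (metis add_mono of_nat_le_iff)
    moreover have "real ((n - g) * k) = real k * (real n - real g)" using nD by (simp add: of_nat_diff)
    ultimately show ?thesis by (simp only: mult.commute[of "real g"])
  qed
  have H: "real (\<Sum>v\<in>V. deg_in E V v) \<le> 2 * real (card (edge_set V E))"
    using handshake_le[OF assms(2)] by linarith
  have key: "(real d + real k) * real n - 2 * real (card (edge_set V E)) \<le> (real d + 1) * real g"
  proof -
    have "real (d * (n - g)) = real d * (real n - real g)" using nD by (simp add: of_nat_diff)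
    hence "real (\<Sum>v\<in>V. deg_in E (V - D) v) \<ge> real d * (real n - real g)"
      using A by (metis of_nat_le_iff)
    moreover have "real (\<Sum>v\<in>V. deg_in E V v) = real (\<Sum>v\<in>V. deg_in E D v) + real (\<Sum>v\<in>V. deg_in E (V - D) v)"
      using S by simp
    moreover have "(real d + real k) * real n - (real d + 1) * real g
       = real k * (real n - real g) + (real k - 1) * real g + real d * (real n - real g)"
      by (simp add: algebra_simps)
    ultimately show ?thesis using B H by linarith
  qed
  have pos: "real d + 1 > 0" by simp
  have "((real d + real k) * real n - 2 * real (card (edge_set V E))) / (real d + 1) \<le> real g"
    using key pos by (simp only: pos_divide_le_eq mult.commute)
  thus ?thesis unfolding gD d_def g_def n_def .
qed

end
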